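(* Let $E$ be a real or complex Banach space, let $T$ be a strongly continuous one-parameter semigroup on $E$, let $\mathcal U$ be a countably incomplete ultrafilter on an index set $I$, and let ${}^*$ be the nonstandard universe given by the bounded ultrapower with respect to $\mathcal U$. Let $\Phi:\ell^\infty_I(E)/c_{\mathcal U}\to\widehat E$ be the map $\Phi(\langle f_i\rangle+c_{\mathcal U})=\widehat{f}$, where $f\in{}^*E$ is the $\mathcal U$-equivalence class of $\langle f_i\rangle$, and let $\iota: m^T/(c_{\mathcal U}\cap m^T)\to\ell^\infty_I(E)/c_{\mathcal U}$ be $\iota(\langle f_i\rangle+c_{\mathcal U}\cap m^T)=\langle f_i\rangle+c_{\mathcal U}$. Then $\widehat E$ is isomorphic to $\ell^\infty_I(E)/c_{\mathcal U}$ (via $\Phi$), and $\widehat{E}_T$ is isomorphic to $m^T/(c_{\mathcal U}\cap m^T)$; more precisely $\Phi(\iota(m^T/(c_{\mathcal U}\cap m^T)))=\widehat{E}_T$.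
   Context: A semigroup on $E$ is a map $T:[0,\infty)\to\mathcal L(E)$ (bounded linear operators) with $T(0)=\mathrm{Id}$ and $T(s+t)=T(s)T(t)$; it is strongly continuous if $\lim_{t\to0}\|T(t)f-f\|=0$ for every $f\in E$. $\ell^\infty_I(E)$ is the space of bounded $E$-valued families $\langle f_i\rangle_{i\in I}$ with the sup-norm. $c_{\mathcal U}$ is the set of $\langle f_i\rangle\in\ell^\infty_I(E)$ such that for every $\varepsilon>0$ there is $J\in\mathcal U$ with $\|f_i\|<\varepsilon$ for all $i\in J$; $\ell^\infty_I(E)/c_{\mathcal U}$ carries the quotient norm. $\tilde T(t)\langle f_i\rangle:=\langle T(t)f_i\rangle$ is a semigroup on $\ell^\infty_I(E)$, and $m^T:=\{x\in\ell^\infty_I(E):\lim_{t\to0}\|\tilde T(t)x-x\|=0\}$. Nonstandard setting: the bounded ultrapower is the nonstandard universe (superstructure embedding ${}^*$ satisfying transfer for bounded formulas) in which ${}^*E$ consists of $\mathcal U$-equivalence classes of $I$-sequences in $E$, and ${}^*$ acts on $E$ as the diagonal embedding. A nonstandard real $r$ is finite if $|r|<n$ for some standard $n\in\mathbb N$, infinitesimal if $|r|<1/n$ for all standard $n\ge1$; $f\approx g$ means $\|f-g\|$ is infinitesimal. $\mathrm{fin}({}^*E)$ is the set of $f\in{}^*E$ with $\|f\|$ finite, $E_0$ the set of $f$ with $\|f\|$ infinitesimal, $\widehat E=\mathrm{fin}({}^*E)/E_0$ with class map $f\mapsto\widehat f$ and norm $\|\widehat f\|=\mathrm{st}(\|f\|)$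 (standard part). $E_T$ is the set of $f\in\mathrm{fin}({}^*E)$ such that for every standard $\varepsilon>0$ there is a standard $\delta>0$ with $\|{}^*T(t)f-f\|<\varepsilon$ for all positive nonstandard $t<\delta$ (equivalently, $\|{}^*T(h)f-f\|$ is infinitesimal for every positive infinitesimal $h$); $\widehat{E}_T=E_T/E_0\subseteq\widehat E$. *)

theory Defs
  imports "HOL-Analysis.Analysis"
begin

definition strongly_continuous_semigroup :: "(real \<Rightarrow> ('a::banach \<Rightarrow>\<^sub>L 'a)) \<Rightarrow> bool" where
  "strongly_continuous_semigroup T \<longleftrightarrow>
     T 0 = id_blinfun \<and>
     (\<forall>s t. 0 \<le> s \<longrightarrow> 0 \<le> t \<longrightarrow> T (s + t) = T s o\<^sub>L T t) \<and>
     (\<forall>f. ((\<lambda>t. norm (T t f - f)) \<longlongrightarrow> 0) (at_right 0))"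

definition is_ultrafilter :: "'i filter \<Rightarrow> bool" where
  "is_ultrafilter U \<longleftrightarrow> U \<noteq> bot \<and> (\<forall>P. eventually P U \<or> eventually (\<lambda>i. \<not> P i) U)"

definition countably_incomplete :: "'i filter \<Rightarrow> bool" where
  "countably_incomplete U \<longleftrightarrow>
     (\<exists>A :: nat \<Rightarrow> 'i set. (\<forall>n. eventually (\<lambda>i. i \<in> A n) U) \<and>
        \<not> eventually (\<lambda>i. i \<in> (\<Inter>n. A n)) U)"

definition linf :: "('i \<Rightarrow> 'a::real_normed_vector) set" where
  "linf = {f. bounded (range f)}"

definition supnorm :: "('i \<Rightarrow> 'a::real_normed_vector) \<Rightarrow> real" where
  "supnorm f = (SUP i. norm (f i))"

definition cU :: "'i filter \<Rightarrow> ('i \<Rightarrow> 'a::real_normed_vector) set" where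
  "cU U = {f \<in> linf. \<forall>\<epsilon>>0. eventually (\<lambda>i. norm (f i) < \<epsilon>) U}"

definition lq_class :: "'i filter \<Rightarrow> ('i \<Rightarrow> 'a::real_normed_vector) \<Rightarrow> ('i \<Rightarrow> 'a) set" where
  "lq_class U f = {g \<in> linf. (\<lambda>i. g i - f i) \<in> cU U}"

definition lq_space :: "'i filter \<Rightarrow> ('i \<Rightarrow> 'a::real_normed_vector) set set" where
  "lq_space U = lq_class U ` linf"

definition qnorm :: "('i \<Rightarrow> 'a::real_normed_vector) set \<Rightarrow> real" where
  "qnorm X = (INF g\<in>X. supnorm g)"

definition mT :: "(real \<Rightarrow> ('a::banach \<Rightarrow>\<^sub>L 'a)) \<Rightarrow> ('i \<Rightarrow> 'a) set" where
  "mT T = {x \<in> linf. ((\<lambda>t. supnorm (\<lambda>i. T t (x i) - x i)) \<longlongrightarrow> 0) (at_right 0)}"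

definition mq_class :: "'i filter \<Rightarrow> (real \<Rightarrow> ('a::banach \<Rightarrow>\<^sub>L 'a)) \<Rightarrow> ('i \<Rightarrow> 'a) \<Rightarrow> ('i \<Rightarrow> 'a) set" where
  "mq_class U T f = {g \<in> mT T. (\<lambda>i. g i - f i) \<in> cU U \<inter> mT T}"

definition mq_space :: "'i filter \<Rightarrow> (real \<Rightarrow> ('a::banach \<Rightarrow>\<^sub>L 'a)) \<Rightarrow> ('i \<Rightarrow> 'a) set set" where
  "mq_space U T = mq_class U T ` mT T"

definition iota :: "'i filter \<Rightarrow> ('i \<Rightarrow> 'a::real_normed_vector) set \<Rightarrow> ('i \<Rightarrow> 'a) set" where
  "iota U X = lq_class U (SOME f. f \<in> X)"

text \<open>Elements of *E are represented by I-sequences (U-equivalence classes); all notions below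
  are invariant under U-a.e. equality of representatives.\<close>

definition finite_norm :: "'i filter \<Rightarrow> ('i \<Rightarrow> 'a::real_normed_vector) \<Rightarrow> bool" where
  "finite_norm U f \<longleftrightarrow> (\<exists>n::nat. eventually (\<lambda>i. norm (f i) < real n) U)"

definition infinitesimal_norm :: "'i filter \<Rightarrow> ('i \<Rightarrow> 'a::real_normed_vector) \<Rightarrow> bool" where
  "infinitesimal_norm U f \<longleftrightarrow> (\<forall>n::nat. n \<ge> 1 \<longrightarrow> eventually (\<lambda>i. norm (f i) < 1 / real n) U)"

definition fin_star :: "'i filter \<Rightarrow> ('i \<Rightarrow> 'a::real_normed_vector) set" where
  "fin_star U = {f. finite_norm U f}"

text \<open>The class hat f in E-hat = fin( *E)/E_0.\<close>
definition hat_class :: "'i filter \<Rightarrow> ('i \<Rightarrow> 'a::real_normed_vector) \<Rightarrow> ('i \<Rightarrow> 'a) set" where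
  "hat_class U f = {g \<in> fin_star U. infinitesimal_norm U (\<lambda>i. g i - f i)}"

definition hat_space :: "'i filter \<Rightarrow> ('i \<Rightarrow> 'a::real_normed_vector) set set" where
  "hat_space U = hat_class U ` fin_star U"

text \<open>Norm on E-hat: the standard part of the nonstandard norm, i.e. the U-limit of the norms.\<close>
definition hat_norm :: "'i filter \<Rightarrow> ('i \<Rightarrow> 'a::real_normed_vector) set \<Rightarrow> real" where
  "hat_norm U X = Lim U (\<lambda>i. norm ((SOME f. f \<in> X) i))"

text \<open>E_T: f finite, and for every standard eps > 0 there is a standard delta > 0 such that
  for every positive nonstandard t < delta (a U-class of reals t_i), ||*T(t) f - f|| < eps.\<close>
definition E_T :: "'i filter \<Rightarrow> (real \<Rightarrow> ('a::banach \<Rightarrow>\<^sub>L 'a)) \<Rightarrow> ('i \<Rightarrow> 'a) set" where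
  "E_T U T = {f \<in> fin_star U. \<forall>\<epsilon>>0. \<exists>\<delta>>0. \<forall>t :: 'i \<Rightarrow> real.
      eventually (\<lambda>i. 0 < t i \<and> t i < \<delta>) U \<longrightarrow>
      eventually (\<lambda>i. norm (T (t i) (f i) - f i) < \<epsilon>) U}"

definition hat_E_T :: "'i filter \<Rightarrow> (real \<Rightarrow> ('a::banach \<Rightarrow>\<^sub>L 'a)) \<Rightarrow> ('i \<Rightarrow> 'a) set set" where
  "hat_E_T U T = hat_class U ` E_T U T"

definition lq_add :: "'i filter \<Rightarrow> ('i \<Rightarrow> 'a::real_normed_vector) set \<Rightarrow> ('i \<Rightarrow> 'a) set \<Rightarrow> ('i \<Rightarrow> 'a) set" where
  "lq_add U X Y = lq_class U (\<lambda>i. (SOME f. f \<in> X) i + (SOME g. g \<in> Y) i)"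

definition lq_scale :: "'i filter \<Rightarrow> real \<Rightarrow> ('i \<Rightarrow> 'a::real_normed_vector) set \<Rightarrow> ('i \<Rightarrow> 'a) set" where
  "lq_scale U a X = lq_class U (\<lambda>i. a *\<^sub>R (SOME f. f \<in> X) i)"

definition hat_add :: "'i filter \<Rightarrow> ('i \<Rightarrow> 'a::real_normed_vector) set \<Rightarrow> ('i \<Rightarrow> 'a) set \<Rightarrow> ('i \<Rightarrow> 'a) set" where
  "hat_add U X Y = hat_class U (\<lambda>i. (SOME f. f \<in> X) i + (SOME g. g \<in> Y) i)"

definition hat_scale :: "'i filter \<Rightarrow> real \<Rightarrow> ('i \<Rightarrow> 'a::real_normed_vector) set \<Rightarrow> ('i \<Rightarrow> 'a) set" where
  "hat_scale U a X = hat_class U (\<lambda>i. a *\<^sub>R (SOME f. f \<in> X) i)"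

definition Phi :: "'i filter \<Rightarrow> ('i \<Rightarrow> 'a::real_normed_vector) set \<Rightarrow> ('i \<Rightarrow> 'a) set" where
  "Phi U X = hat_class U (SOME f. f \<in> X)"

end

theory Submission
  imports Defs
begin


lemma inf_iff:
  "infinitesimal_norm U f \<longleftrightarrow> (\<forall>e>0. eventually (\<lambda>i. norm (f i) < e) U)"
proof
  assume H: "infinitesimal_norm U f"
  show "\<forall>e>0. eventually (\<lambda>i. norm (f i) < e) U"
  proof (intro allI impI)
    fix e :: real assume "e > 0"
    then obtain n where n: "inverse (real (Suc n)) < e" using reals_Archimedean by blast
    have "eventually (\<lambda>i. norm (f i) < 1 / real (Suc n)) U"
      using H[unfolded infinitesimal_norm_def, rule_format, of "Suc n"] by simp
    then show "eventually (\<lambda>i. norm (f i) < e) U"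
      by (rule eventually_mono) (metis n inverse_eq_divide less_trans)
  qed
next
  assume "\<forall>e>0. eventually (\<lambda>i. norm (f i) < e) U"
  then show "infinitesimal_norm U f" unfolding infinitesimal_norm_def by auto
qed

definition infs :: "'i filter \<Rightarrow> ('i \<Rightarrow> 'a::real_normed_vector) \<Rightarrow> bool" where
  "infs U f \<longleftrightarrow> (\<forall>e>0. eventually (\<lambda>i. norm (f i) < e) U)"

lemma infs_add: "infs U f \<Longrightarrow> infs U g \<Longrightarrow> infs U (\<lambda>i. f i + g i)"
  unfolding infs_def
proof (intro allI impI)
  fix e :: real assume f: "\<forall>e>0. eventually (\<lambda>i. norm (f i) < e) U"
    and g: "\<forall>e>0. eventually (\<lambda>i. norm (g i) < e) U" and e: "e > 0"
  have "eventually (\<lambda>i. norm (f i) < e/2 \<and> norm (g i) < e/2) U"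
    using f[rule_format, of "e/2"] g[rule_format, of "e/2"] e by (intro eventually_conj) auto
  then show "eventually (\<lambda>i. norm (f i + g i) < e) U"
    by (rule eventually_mono) (auto intro!: norm_triangle_lt)
qed

lemma infs_minus: "infs U f \<Longrightarrow> infs U (\<lambda>i. - f i)"
  unfolding infs_def by simp

lemma infs_diff: "infs U f \<Longrightarrow> infs U g \<Longrightarrow> infs U (\<lambda>i. f i - g i)"
proof -
  assume a: "infs U f" "infs U g"
  have "infs U (\<lambda>i. f i + - g i)" by (rule infs_add[OF a(1) infs_minus[OF a(2)]])
  then show ?thesis by simp
qed

lemma infs_scale: "infs U f \<Longrightarrow> infs U (\<lambda>i. a *\<^sub>R f i)"
  unfolding infs_def
proof (intro allI impI)
  fix e :: real assume f: "\<forall>e>0. eventually (\<lambda>i. norm (f i) < e) U" and e: "e > 0"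
  have "e / (\<bar>a\<bar> + 1) > 0" using e by simp
  then have "eventually (\<lambda>i. norm (f i) < e / (\<bar>a\<bar> + 1)) U" using f by blast
  then show "eventually (\<lambda>i. norm (a *\<^sub>R f i) < e) U"
  proof (rule eventually_mono)
    fix i assume h: "norm (f i) < e / (\<bar>a\<bar> + 1)"
    have "norm (a *\<^sub>R f i) = \<bar>a\<bar> * norm (f i)" by simp
    also have "\<dots> \<le> (\<bar>a\<bar> + 1) * norm (f i)" by (simp add: mult_right_mono)
    also have "\<dots> < e" using h by (simp add: field_simps)
    finally show "norm (a *\<^sub>R f i) < e" .
  qed
qed

lemma infs_zero: "infs U (\<lambda>i. 0)" unfolding infs_def by simp

lemma infs_ev0: "eventually (\<lambda>i. f i = 0) U \<Longrightarrow> infs U f"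
  unfolding infs_def by (auto elim: eventually_mono)

lemma infs_sym: "infs U (\<lambda>i. f i - g i) \<Longrightarrow> infs U (\<lambda>i. g i - f i)"
  using infs_minus by fastforce

lemma infinitesimal_infs: "infinitesimal_norm U f = infs U f"
  by (simp add: inf_iff infs_def)

lemma cU_iff: "f \<in> cU U \<longleftrightarrow> f \<in> linf \<and> infs U f"
  by (simp add: cU_def infs_def)

lemma hat_class_eq:
  assumes "infs U (\<lambda>i. f i - g i)"
  shows "hat_class U f = hat_class U g"
proof -
  have "infs U (\<lambda>i. h i - f i) \<longleftrightarrow> infs U (\<lambda>i. h i - g i)" for h
  proof
    assume "infs U (\<lambda>i. h i - f i)"
    from infs_add[OF this assms] show "infs U (\<lambda>i. h i - g i)" by simp
  next
    assume "infs U (\<lambda>i. h i - g i)"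
    from infs_diff[OF this assms] show "infs U (\<lambda>i. h i - f i)" by simp
  qed
  then have "h \<in> hat_class U f \<longleftrightarrow> h \<in> hat_class U g" for h
    unfolding hat_class_def infinitesimal_infs mem_Collect_eq by blast
  then show ?thesis by blast
qed

lemma hat_class_self: "f \<in> fin_star U \<Longrightarrow> f \<in> hat_class U f"
  using infs_zero[of U] by (simp add: hat_class_def infinitesimal_infs)

lemma hat_class_eqD:
  assumes "hat_class U f = hat_class U g" "f \<in> fin_star U"
  shows "infs U (\<lambda>i. f i - g i)"
proof -
  have "f \<in> hat_class U g" using hat_class_self[OF assms(2)] assms(1) by simp
  then show ?thesis unfolding hat_class_def infinitesimal_infs mem_Collect_eq by blast
qed


lemma linf_iff: "f \<in> linf \<longleftrightarrow> (\<exists>B. \<forall>i. norm (f i) \<le> B)"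
  unfolding linf_def bounded_iff by auto

lemma linf_diff: "f \<in> linf \<Longrightarrow> g \<in> linf \<Longrightarrow> (\<lambda>i. f i - g i) \<in> linf"
  unfolding linf_iff by (metis add_mono norm_triangle_ineq4 order_trans)

lemma linf_add: "f \<in> linf \<Longrightarrow> g \<in> linf \<Longrightarrow> (\<lambda>i. f i + g i) \<in> linf"
  unfolding linf_iff by (metis add_mono norm_triangle_ineq order_trans)

lemma linf_scale: "f \<in> linf \<Longrightarrow> (\<lambda>i. a *\<^sub>R f i) \<in> linf"
proof -
  assume "f \<in> linf"
  then obtain B where B: "\<And>i. norm (f i) \<le> B" unfolding linf_iff by auto
  have "norm (a *\<^sub>R f i) \<le> \<bar>a\<bar> * B" for i using B[of i] by (simp add: mult_left_mono)
  then show ?thesis unfolding linf_iff by blast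
qed

lemma linf_zero: "(\<lambda>i. 0) \<in> linf"
  unfolding linf_iff by auto

lemma linf_fin: "f \<in> linf \<Longrightarrow> f \<in> fin_star U"
proof -
  assume "f \<in> linf"
  then obtain B where B: "\<And>i. norm (f i) \<le> B" unfolding linf_iff by auto
  obtain n :: nat where "B < real n" using reals_Archimedean2 by blast
  then have "\<forall>i. norm (f i) < real n" using B le_less_trans by blast
  then show ?thesis unfolding fin_star_def finite_norm_def by (auto intro!: exI[of _ n])
qed

lemma lq_class_eq:
  assumes "infs U (\<lambda>i. f i - g i)" "f \<in> linf" "g \<in> linf"
  shows "lq_class U f = lq_class U g"
proof -
  have "h \<in> lq_class U f \<longleftrightarrow> h \<in> lq_class U g" for h
  proof -
    have "infs U (\<lambda>i. h i - f i) \<longleftrightarrow> infs U (\<lambda>i. h i - g i)"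
    proof
      assume "infs U (\<lambda>i. h i - f i)"
      from infs_add[OF this assms(1)] show "infs U (\<lambda>i. h i - g i)" by simp
    next
      assume "infs U (\<lambda>i. h i - g i)"
      from infs_diff[OF this assms(1)] show "infs U (\<lambda>i. h i - f i)" by simp
    qed
    then show ?thesis unfolding lq_class_def cU_iff mem_Collect_eq
      using linf_diff assms(2,3) by blast
  qed
  then show ?thesis by blast
qed

lemma lq_class_self: "f \<in> linf \<Longrightarrow> f \<in> lq_class U f"
  unfolding lq_class_def cU_iff using infs_zero[of U] linf_zero by simp

lemma some_lq:
  assumes "f \<in> linf"
  shows "(SOME g. g \<in> lq_class U f) \<in> linf \<and> infs U (\<lambda>i. (SOME g. g \<in> lq_class U f) i - f i)"
proof -
  have "(SOME g. g \<in> lq_class U f) \<in> lq_class U f"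
    using lq_class_self[OF assms, of U] by (rule someI[where P="\<lambda>g. g \<in> lq_class U f"])
  then show ?thesis unfolding lq_class_def cU_iff by blast
qed

lemma Phi_lq: "f \<in> linf \<Longrightarrow> Phi U (lq_class U f) = hat_class U f"
  unfolding Phi_def using some_lq hat_class_eq by blast

lemma ultra_lim:
  fixes a :: "'i \<Rightarrow> real"
  assumes U: "is_ultrafilter U" and B: "\<And>i. \<bar>a i\<bar> \<le> B"
  shows "\<exists>L. (a \<longlongrightarrow> L) U"
proof -
  define S where "S = {r. eventually (\<lambda>i. r \<le> a i) U}"
  have nb: "U \<noteq> bot" and uf: "\<And>P. eventually P U \<or> eventually (\<lambda>i. \<not> P i) U"
    using U unfolding is_ultrafilter_def by auto
  have "-B \<le> a i" for i using B[of i] by (simp add: abs_le_iff)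
  then have "-B \<in> S" unfolding S_def by (simp add: always_eventually)
  then have ne: "S \<noteq> {}" by blast
  have ub: "r \<le> B" if "r \<in> S" for r
  proof (rule ccontr)
    assume "\<not> r \<le> B"
    have "eventually (\<lambda>i. r \<le> a i) U" using that S_def by simp
    then have "eventually (\<lambda>i. False) U"
      by (rule eventually_mono) (metis B abs_le_iff order_trans \<open>\<not> r \<le> B\<close>)
    then show False using nb by (simp add: eventually_False)
  qed
  then have bdd: "bdd_above S" unfolding bdd_above_def by blast
  define L where "L = Sup S"
  have "(a \<longlongrightarrow> L) U"
  proof (rule order_tendstoI)
    fix y assume "y < L"
    then obtain r where "r \<in> S" "y < r" using less_cSup_iff[OF ne bdd] L_def by auto
    then have "eventually (\<lambda>i. r \<le> a i) U" using S_def by simp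
    then show "eventually (\<lambda>i. y < a i) U"
      by (rule eventually_mono) (use \<open>y < r\<close> in auto)
  next
    fix y assume "L < y"
    show "eventually (\<lambda>i. a i < y) U"
    proof (rule ccontr)
      assume "\<not> eventually (\<lambda>i. a i < y) U"
      then have "eventually (\<lambda>i. \<not> a i < y) U" using uf by blast
      then have "eventually (\<lambda>i. y \<le> a i) U" by (rule eventually_mono) simp
      then have "y \<in> S" using S_def by simp
      then have "y \<le> L" unfolding L_def by (rule cSup_upper[OF _ bdd])
      then show False using \<open>L < y\<close> by simp
    qed
  qed
  then show ?thesis by blast
qed


lemma some_hat:
  assumes "f \<in> fin_star U"
  shows "(SOME g. g \<in> hat_class U f) \<in> fin_star U \<and> infs U (\<lambda>i. (SOME g. g \<in> hat_class U f) i - f i)"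
proof -
  have "(SOME g. g \<in> hat_class U f) \<in> hat_class U f"
    using hat_class_self[OF assms] by (rule someI[where P="\<lambda>g. g \<in> hat_class U f"])
  then show ?thesis unfolding hat_class_def infinitesimal_infs by blast
qed

lemma some_lqspace:
  assumes "X \<in> lq_space U"
  shows "(SOME f. f \<in> X) \<in> linf \<and> X = lq_class U (SOME f. f \<in> X)"
proof -
  obtain f where f: "f \<in> linf" "X = lq_class U f" using assms unfolding lq_space_def by blast
  have "(SOME g. g \<in> lq_class U f) \<in> linf \<and> infs U (\<lambda>i. (SOME g. g \<in> lq_class U f) i - f i)"
    by (rule some_lq[OF f(1)])
  then show ?thesis using f lq_class_eq by metis
qed

lemma Phi_bij: "bij_betw (Phi U) (lq_space U :: ('i \<Rightarrow> 'a::real_normed_vector) set set) (hat_space U)"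
  unfolding bij_betw_def
proof
  show "inj_on (Phi U) (lq_space U)"
  proof (rule inj_onI)
    fix X Y assume X: "X \<in> lq_space U" and Y: "Y \<in> lq_space U" and e: "Phi U X = Phi U Y"
    obtain f where f: "f \<in> linf" "X = lq_class U f" using X unfolding lq_space_def by blast
    obtain g where g: "g \<in> linf" "Y = lq_class U g" using Y unfolding lq_space_def by blast
    have "hat_class U f = hat_class U g" using e f g Phi_lq by metis
    then have "infs U (\<lambda>i. f i - g i)" using hat_class_eqD linf_fin f(1) by blast
    then show "X = Y" using f g lq_class_eq by metis
  qed
next
  show "Phi U ` lq_space U = hat_space U"
  proof
    show "Phi U ` lq_space U \<subseteq> hat_space U"
      unfolding lq_space_def hat_space_def using Phi_lq linf_fin by fastforce
  next
    show "hat_space U \<subseteq> Phi U ` lq_space U"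
    proof
      fix Z assume "Z \<in> hat_space U"
      then obtain f where f: "f \<in> fin_star U" "Z = hat_class U f" unfolding hat_space_def by blast
      then obtain n :: nat where n: "eventually (\<lambda>i. norm (f i) < real n) U"
        unfolding fin_star_def finite_norm_def by blast
      define f' where "f' = (\<lambda>i. if norm (f i) < real n then f i else 0)"
      have "norm (f' i) \<le> real n" for i unfolding f'_def by auto
      then have f'l: "f' \<in> linf" unfolding linf_iff by blast
      have "eventually (\<lambda>i. f' i - f i = 0) U" using n by (rule eventually_mono) (simp add: f'_def)
      then have "infs U (\<lambda>i. f' i - f i)" by (rule infs_ev0)
      then have "hat_class U f' = Z" using f hat_class_eq by metis
      then have "Z = Phi U (lq_class U f')" using Phi_lq[OF f'l] by simp
      moreover have "lq_class U f' \<in> lq_space U" unfolding lq_space_def using f'l by blast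
      ultimately show "Z \<in> Phi U ` lq_space U" by blast
    qed
  qed
qed

lemma Phi_eq: "X \<in> lq_space U \<Longrightarrow> Phi U X = hat_class U (SOME f. f \<in> X)"
  by (simp add: Phi_def)

lemma Phi_add:
  assumes X: "X \<in> lq_space U" and Y: "Y \<in> lq_space U"
  shows "Phi U (lq_add U X Y) = hat_add U (Phi U X) (Phi U Y)"
proof -
  define x0 where "x0 = (SOME f. f \<in> X)"
  define y0 where "y0 = (SOME f. f \<in> Y)"
  have x0: "x0 \<in> linf" using some_lqspace[OF X] x0_def by simp
  have y0: "y0 \<in> linf" using some_lqspace[OF Y] y0_def by simp
  define p where "p = (SOME g. g \<in> hat_class U x0)"
  define q where "q = (SOME g. g \<in> hat_class U y0)"
  have p: "infs U (\<lambda>i. p i - x0 i)" using some_hat[OF linf_fin[OF x0]] p_def by simp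
  have q: "infs U (\<lambda>i. q i - y0 i)" using some_hat[OF linf_fin[OF y0]] q_def by simp
  have "Phi U (lq_add U X Y) = hat_class U (\<lambda>i. x0 i + y0 i)"
    unfolding lq_add_def x0_def[symmetric] y0_def[symmetric] by (rule Phi_lq[OF linf_add[OF x0 y0]])
  also have "\<dots> = hat_class U (\<lambda>i. p i + q i)"
  proof (rule hat_class_eq)
    have "infs U (\<lambda>i. (p i - x0 i) + (q i - y0 i))" by (rule infs_add[OF p q])
    then have "infs U (\<lambda>i. (p i + q i) - (x0 i + y0 i))" by (simp add: algebra_simps)
    then show "infs U (\<lambda>i. (x0 i + y0 i) - (p i + q i))" by (rule infs_sym)
  qed
  also have "\<dots> = hat_add U (Phi U X) (Phi U Y)"
    unfolding hat_add_def Phi_def x0_def[symmetric] y0_def[symmetric] p_def q_def ..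
  finally show ?thesis .
qed

lemma Phi_scale:
  assumes X: "X \<in> lq_space U"
  shows "Phi U (lq_scale U a X) = hat_scale U a (Phi U X)"
proof -
  define x0 where "x0 = (SOME f. f \<in> X)"
  have x0: "x0 \<in> linf" using some_lqspace[OF X] x0_def by simp
  define p where "p = (SOME g. g \<in> hat_class U x0)"
  have p: "infs U (\<lambda>i. p i - x0 i)" using some_hat[OF linf_fin[OF x0]] p_def by simp
  have "Phi U (lq_scale U a X) = hat_class U (\<lambda>i. a *\<^sub>R x0 i)"
    unfolding lq_scale_def x0_def[symmetric] by (rule Phi_lq[OF linf_scale[OF x0]])
  also have "\<dots> = hat_class U (\<lambda>i. a *\<^sub>R p i)"
  proof (rule hat_class_eq)
    have "infs U (\<lambda>i. a *\<^sub>R (p i - x0 i))" by (rule infs_scale[OF p])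
    then have "infs U (\<lambda>i. a *\<^sub>R p i - a *\<^sub>R x0 i)" by (simp add: algebra_simps)
    then show "infs U (\<lambda>i. a *\<^sub>R x0 i - a *\<^sub>R p i)" by (rule infs_sym)
  qed
  also have "\<dots> = hat_scale U a (Phi U X)"
    unfolding hat_scale_def Phi_def x0_def[symmetric] p_def ..
  finally show ?thesis .
qed

lemma lim_transfer:
  assumes "((\<lambda>i. norm (x i)) \<longlongrightarrow> L) U" "infs U (\<lambda>i. g i - x i)"
  shows "((\<lambda>i. norm (g i)) \<longlongrightarrow> L) U"
proof (rule Lim_transform[OF assms(1)])
  show "((\<lambda>i. norm (g i) - norm (x i)) \<longlongrightarrow> 0) U"
  proof (rule tendstoI)
    fix e :: real assume "e > 0"
    then have "eventually (\<lambda>i. norm (g i - x i) < e) U" using assms(2) unfolding infs_def by blast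
    then show "eventually (\<lambda>i. dist (norm (g i) - norm (x i)) 0 < e) U"
      by (rule eventually_mono) (auto simp: dist_real_def intro: le_less_trans[OF norm_triangle_ineq3])
  qed
qed

lemma supnorm_ge: "g \<in> linf \<Longrightarrow> norm (g i) \<le> supnorm g"
  unfolding supnorm_def linf_def
  by (rule cSUP_upper) (auto simp: bounded_iff bdd_above_def)

lemma Phi_norm:
  assumes U: "is_ultrafilter U" and X: "X \<in> lq_space U"
  shows "hat_norm U (Phi U X) = qnorm X"
proof -
  have nb: "U \<noteq> bot" using U unfolding is_ultrafilter_def by auto
  define x0 where "x0 = (SOME f. f \<in> X)"
  have x0: "x0 \<in> linf" and Xe: "X = lq_class U x0" using some_lqspace[OF X] x0_def by auto
  obtain B where B: "\<And>i. norm (x0 i) \<le> B" using x0 unfolding linf_iff by blast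
  have "\<exists>L. ((\<lambda>i. norm (x0 i)) \<longlongrightarrow> L) U"
    by (rule ultra_lim[OF U, of _ B]) (use B in auto)
  then obtain L where L: "((\<lambda>i. norm (x0 i)) \<longlongrightarrow> L) U" by blast
  have L0: "0 \<le> L" by (rule tendsto_lowerbound[OF L _ nb]) auto
  define p where "p = (SOME g. g \<in> hat_class U x0)"
  have p: "infs U (\<lambda>i. p i - x0 i)" using some_hat[OF linf_fin[OF x0]] p_def by simp
  have "hat_norm U (Phi U X) = Lim U (\<lambda>i. norm (p i))"
    unfolding hat_norm_def Phi_def x0_def[symmetric] p_def ..
  also have "\<dots> = L" by (rule tendsto_Lim[OF nb lim_transfer[OF L p]])
  finally have hn: "hat_norm U (Phi U X) = L" .
  have lower: "L \<le> supnorm g" if "g \<in> X" for g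
  proof -
    have g: "g \<in> linf" "infs U (\<lambda>i. g i - x0 i)" using that Xe unfolding lq_class_def cU_iff by auto
    show ?thesis
      by (rule tendsto_upperbound[OF lim_transfer[OF L g(2)] _ nb])
         (use supnorm_ge[OF g(1)] in auto)
  qed
  have upper: "\<exists>g\<in>X. supnorm g \<le> L + e" if "e > 0" for e
  proof -
    define g where "g = (\<lambda>i. if norm (x0 i) < L + e then x0 i else 0)"
    have ev: "eventually (\<lambda>i. norm (x0 i) < L + e) U"
      using order_tendstoD(2)[OF L] that by simp
    have gb: "norm (g i) \<le> L + e" for i unfolding g_def using L0 that by auto
    then have gl: "g \<in> linf" unfolding linf_iff by blast
    have "eventually (\<lambda>i. g i - x0 i = 0) U" using ev by (rule eventually_mono) (simp add: g_def)
    then have "infs U (\<lambda>i. g i - x0 i)" by (rule infs_ev0)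
    then have "g \<in> X" unfolding Xe lq_class_def cU_iff using gl linf_diff x0 by blast
    moreover have "supnorm g \<le> L + e" unfolding supnorm_def
      by (rule cSUP_least) (use gb in auto)
    ultimately show ?thesis by blast
  qed
  have ne: "X \<noteq> {}" using lq_class_self[OF x0, of U] Xe by auto
  have bb: "bdd_below (supnorm ` X)" using lower unfolding bdd_below_def by blast
  have "qnorm X = L"
  proof (rule antisym)
    show "qnorm X \<le> L"
    proof (rule field_le_epsilon)
      fix e :: real assume "e > 0"
      then obtain g where "g \<in> X" "supnorm g \<le> L + e" using upper by blast
      then show "qnorm X \<le> L + e" unfolding qnorm_def using cINF_lower[OF bb] order_trans by blast
    qed
  next
    show "L \<le> qnorm X" unfolding qnorm_def by (rule cINF_greatest[OF ne lower])
  qed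
  then show ?thesis using hn by simp
qed



lemma UB:
  fixes A :: "nat \<Rightarrow> 'a::banach \<Rightarrow>\<^sub>L 'b::real_normed_vector"
  assumes pb: "\<And>x. \<exists>C. \<forall>n. norm (A n x) \<le> C"
  shows "\<exists>K. \<forall>n. norm (A n) \<le> K"
proof -
  define G where "G m = {x. \<forall>n. norm (A n x) \<le> real m}" for m :: nat
  have cl: "closed (G m)" for m unfolding G_def
    by (intro closed_Collect_all closed_Collect_le continuous_on_const continuous_on_norm
        bounded_linear.continuous_on[OF blinfun.bounded_linear_right] continuous_on_id)
  have un: "(\<Union>m. G m) = UNIV"
  proof -
    have "x \<in> (\<Union>m. G m)" for x
    proof -
      obtain C where C: "\<forall>n. norm (A n x) \<le> C" using pb by blast
      obtain m :: nat where "C \<le> real m" using real_arch_simple by blast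
      then have "x \<in> G m" unfolding G_def using C order_trans by blast
      then show ?thesis by blast
    qed
    then show ?thesis by blast
  qed
  have "\<exists>m. interior (G m) \<noteq> {}"
  proof (rule ccontr)
    assume "\<not> (\<exists>m. interior (G m) \<noteq> {})"
    then have e: "\<And>m. interior (G m) = {}" by blast
    have "Met_TC.mtopology interior_of \<Union> (range G) = {}"
      by (rule Met_TC.metric_Baire_category_alt) (auto simp: e cl complete_UNIV)
    then show False using un by simp
  qed
  then obtain m x0 where "x0 \<in> interior (G m)" by blast
  then obtain r where r: "r > 0" "ball x0 r \<subseteq> G m"
    by (meson interior_subset open_contains_ball_eq open_interior order_trans)
  have bnd: "norm (A n y) \<le> (4 * real m / r) * norm y" for n y
  proof (cases "y = 0")
    case True then show ?thesis by simp
  next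
    case False
    then have ny: "norm y > 0" by simp
    define c where "c = r / 2 / norm y"
    have c: "c > 0" using r ny by (simp add: c_def)
    define z where "z = c *\<^sub>R y"
    have nz: "norm z = r / 2" using ny c r by (simp add: z_def c_def)
    have "x0 + z \<in> ball x0 r" using nz r by (simp add: dist_norm)
    then have h1: "norm (A n (x0 + z)) \<le> real m" using r G_def by blast
    have "x0 \<in> ball x0 r" using r by simp
    then have h2: "norm (A n x0) \<le> real m" using r G_def by blast
    have "A n z = A n (x0 + z) - A n x0" by (simp add: blinfun.add_right)
    then have "norm (A n z) \<le> 2 * real m" using h1 h2 norm_triangle_ineq4[of "A n (x0 + z)" "A n x0"] by simp
    moreover have "norm (A n z) = c * norm (A n y)" using c by (simp add: z_def blinfun.scaleR_right)
    ultimately have "c * norm (A n y) \<le> 2 * real m" by simp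
    then have "norm (A n y) \<le> 2 * real m / c" using c by (simp add: field_simps)
    also have "2 * real m / c = (4 * real m / r) * norm y" using r ny by (simp add: c_def field_simps)
    finally show ?thesis .
  qed
  have "norm (A n) \<le> 4 * real m / r" for n
    by (rule norm_blinfun_bound) (use r bnd in auto)
  then show ?thesis by blast
qed

definition avg :: "(real \<Rightarrow> ('a::banach \<Rightarrow>\<^sub>L 'a)) \<Rightarrow> real \<Rightarrow> 'a \<Rightarrow> 'a" where
  "avg T h x = (1 / h) *\<^sub>R integral {0..h} (\<lambda>s. T s x)"

context
  fixes T :: "real \<Rightarrow> ('a::banach \<Rightarrow>\<^sub>L 'a)"
  assumes sg: "strongly_continuous_semigroup T"
begin

lemma T0: "T 0 x = x"
  using sg unfolding strongly_continuous_semigroup_def by simp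

lemma Tadd: "0 \<le> s \<Longrightarrow> 0 \<le> t \<Longrightarrow> T (s + t) x = T s (T t x)"
  using sg unfolding strongly_continuous_semigroup_def by simp

lemma Tcont: "((\<lambda>t. norm (T t x - x)) \<longlongrightarrow> 0) (at_right 0)"
  using sg unfolding strongly_continuous_semigroup_def by simp

lemma Tsmall: "e > 0 \<Longrightarrow> \<exists>d>0. \<forall>u. 0 < u \<and> u < d \<longrightarrow> norm (T u x - x) < e"
proof -
  assume "e > 0"
  then have "eventually (\<lambda>t. norm (T t x - x) < e) (at_right 0)"
    using order_tendstoD(2)[OF Tcont] by blast
  then show ?thesis unfolding eventually_at_right_field by auto
qed

lemma loc_bound: "\<exists>\<delta>>0. \<exists>K\<ge>1. \<forall>s. 0 \<le> s \<and> s \<le> \<delta> \<longrightarrow> norm (T s) \<le> K"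
proof (rule ccontr)
  assume "\<not> ?thesis"
  then have H: "\<forall>\<delta>>0. \<forall>K\<ge>1. \<exists>s. 0 \<le> s \<and> s \<le> \<delta> \<and> norm (T s) > K" using not_le by blast
  have "\<forall>n::nat. \<exists>s. 0 \<le> s \<and> s \<le> 1 / (real n + 1) \<and> norm (T s) > real n + 1"
  proof
    fix n :: nat
    have "1 / (real n + 1) > 0" "real n + 1 \<ge> 1" by auto
    then show "\<exists>s. 0 \<le> s \<and> s \<le> 1 / (real n + 1) \<and> norm (T s) > real n + 1" using H by blast
  qed
  then obtain s where s: "\<And>n. 0 \<le> s n" "\<And>n. s n \<le> 1 / (real n + 1)" "\<And>n. norm (T (s n)) > real n + 1"
    by metis
  have idn: "norm (T 0) \<le> 1" using sg unfolding strongly_continuous_semigroup_def by (simp add: norm_blinfun_id_le)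
  have spos: "s n > 0" for n
  proof (rule ccontr)
    assume "\<not> s n > 0" then have "s n = 0" using s(1)[of n] by simp
    then show False using s(3)[of n] idn by simp
  qed
  have s0: "s \<longlonglongrightarrow> 0"
  proof (rule tendsto_sandwich[of "\<lambda>n. 0" _ _ "\<lambda>n. 1 / (real n + 1)"])
    show "eventually (\<lambda>n. 0 \<le> s n) sequentially" using s(1) by simp
    show "eventually (\<lambda>n. s n \<le> 1 / (real n + 1)) sequentially" using s(2) by simp
    have "(\<lambda>n. 1 / (real n + 1)) = (\<lambda>n. inverse (real (Suc n)))"
      by (auto simp: fun_eq_iff inverse_eq_divide add.commute)
    then show "(\<lambda>n. 1 / (real n + 1)) \<longlonglongrightarrow> 0" using LIMSEQ_inverse_real_of_nat by simp
  qed simp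
  have fl: "filterlim s (at_right 0) sequentially"
    by (rule tendsto_imp_filterlim_at_right[OF s0]) (use spos in simp)
  have "\<exists>C. \<forall>n. norm (T (s n) x) \<le> C" for x
  proof -
    have "(\<lambda>n. norm (T (s n) x - x)) \<longlonglongrightarrow> 0"
      by (rule filterlim_compose[OF Tcont fl])
    then have "Bseq (\<lambda>n. norm (T (s n) x - x))" by (rule convergent_imp_Bseq[OF convergentI])
    then obtain C where C: "\<And>n. norm (norm (T (s n) x - x)) \<le> C" unfolding Bseq_def by auto
    have "norm (T (s n) x) \<le> C + norm x" for n
      using C[of n] norm_triangle_ineq2[of "T (s n) x" x] by simp
    then show ?thesis by blast
  qed
  then obtain K where K: "\<And>n. norm (T (s n)) \<le> K" using UB[of "\<lambda>n. T (s n)"] by blast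
  obtain n :: nat where "K \<le> real n" using real_arch_simple by blast
  then show False using K[of n] s(3)[of n] by simp
qed


context
  fixes \<delta> K :: real
  assumes dpos: "\<delta> > 0" and K1: "K \<ge> 1" and Kb: "\<And>s. 0 \<le> s \<Longrightarrow> s \<le> \<delta> \<Longrightarrow> norm (T s) \<le> K"
begin

lemma diff_bound:
  assumes "0 \<le> a" "a \<le> \<delta>" "0 \<le> u"
  shows "norm (T (a + u) x - T a x) \<le> K * norm (T u x - x)"
proof -
  have "T (a + u) x - T a x = T a (T u x - x)" using Tadd assms by (simp add: blinfun.diff_right)
  also have "norm \<dots> \<le> norm (T a) * norm (T u x - x)" by (rule norm_blinfun)
  also have "\<dots> \<le> K * norm (T u x - x)" by (rule mult_right_mono[OF Kb[OF assms(1,2)]]) simp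
  finally show ?thesis .
qed

lemma orbit_cont: "continuous_on {0..\<delta>} (\<lambda>s. T s x)"
  unfolding continuous_on_iff
proof (intro ballI allI impI)
  fix s0 e :: real assume s0: "s0 \<in> {0..\<delta>}" and e: "e > 0"
  obtain d where d: "d > 0" "\<And>u. 0 < u \<Longrightarrow> u < d \<Longrightarrow> norm (T u x - x) < e / K"
    using Tsmall[of "e / K" x] K1 e by auto
  show "\<exists>d>0. \<forall>s\<in>{0..\<delta>}. dist s s0 < d \<longrightarrow> dist (T s x) (T s0 x) < e"
  proof (intro exI conjI ballI impI)
    show "d > 0" by (rule d(1))
    fix s assume s: "s \<in> {0..\<delta>}" and sd: "dist s s0 < d"
    have Kp: "K > 0" using K1 by simp
    consider "s = s0" | "s0 < s" | "s < s0" by linarith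
    then show "dist (T s x) (T s0 x) < e"
    proof cases
      case 1 then show ?thesis using e by simp
    next
      case 2
      have "norm (T (s0 + (s - s0)) x - T s0 x) \<le> K * norm (T (s - s0) x - x)"
        by (rule diff_bound) (use s0 2 in auto)
      also have "\<dots> < K * (e / K)"
      proof (rule mult_strict_left_mono[OF _ Kp])
        show "norm (T (s - s0) x - x) < e / K" using d(2)[of "s - s0"] 2 sd by (simp add: dist_real_def)
      qed
      also have "\<dots> = e" using Kp by simp
      finally show ?thesis by (simp add: dist_norm)
    next
      case 3
      have "norm (T (s + (s0 - s)) x - T s x) \<le> K * norm (T (s0 - s) x - x)"
        by (rule diff_bound) (use s 3 in auto)
      also have "\<dots> < K * (e / K)"
      proof (rule mult_strict_left_mono[OF _ Kp])
        show "norm (T (s0 - s) x - x) < e / K" using d(2)[of "s0 - s"] 3 sd by (simp add: dist_real_def)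
      qed
      also have "\<dots> = e" using Kp by simp
      finally show ?thesis by (simp add: dist_norm norm_minus_commute)
    qed
  qed
qed

lemma cont_sub: "0 \<le> a \<Longrightarrow> b \<le> \<delta> \<Longrightarrow> continuous_on {a..b} (\<lambda>s. T s x)"
  by (rule continuous_on_subset[OF orbit_cont]) auto

lemma int_ok: "0 \<le> a \<Longrightarrow> b \<le> \<delta> \<Longrightarrow> (\<lambda>s. T s x) integrable_on {a..b}"
  by (rule integrable_continuous_interval[OF cont_sub])

context
  fixes h :: real
  assumes hpos: "h > 0" and h2: "2 * h \<le> \<delta>"
begin

lemma avg_near:
  assumes "\<forall>s\<in>{0..h}. norm (T s x - x) \<le> \<eta>"
  shows "norm (avg T h x - x) \<le> \<eta>"
proof -
  have hd: "h \<le> \<delta>" using hpos h2 by simp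
  have I: "integral {0..h} (\<lambda>s. T s x - x) = integral {0..h} (\<lambda>s. T s x) - h *\<^sub>R x"
    using integral_diff[OF int_ok[of 0 h x] integrable_const_ivl[of x 0 h]] hd hpos
    by (simp add: content_real)
  have "norm (integral {0..h} (\<lambda>s. T s x - x)) \<le> \<eta> * (h - 0)"
    by (rule integral_bound) (use hpos assms in \<open>auto intro!: continuous_intros cont_sub hd\<close>)
  then have B: "norm (integral {0..h} (\<lambda>s. T s x) - h *\<^sub>R x) \<le> \<eta> * h" using I by simp
  have "avg T h x - x = (1 / h) *\<^sub>R (integral {0..h} (\<lambda>s. T s x) - h *\<^sub>R x)"
    unfolding avg_def using hpos by (simp add: scaleR_diff_right)
  then have "norm (avg T h x - x) = (1 / h) * norm (integral {0..h} (\<lambda>s. T s x) - h *\<^sub>R x)"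
    using hpos by simp
  also have "\<dots> \<le> (1 / h) * (\<eta> * h)" using B hpos by (intro mult_left_mono) auto
  also have "\<dots> = \<eta>" using hpos by simp
  finally show ?thesis .
qed

lemma avg_bound: "norm (avg T h x) \<le> K * norm x"
proof -
  have hd: "h \<le> \<delta>" using hpos h2 by simp
  have "norm (integral {0..h} (\<lambda>s. T s x)) \<le> (K * norm x) * (h - 0)"
  proof (rule integral_bound)
    show "continuous_on {0..h} (\<lambda>s. T s x)" by (rule cont_sub) (use hd in auto)
    fix s assume "s \<in> {0..h}"
    then have "norm (T s) \<le> K" using Kb hd by auto
    then show "norm (T s x) \<le> K * norm x"
      using norm_blinfun[of "T s" x] mult_right_mono[of "norm (T s)" K "norm x"] by simp
  qed (use hpos in auto)
  then show ?thesis unfolding avg_def using hpos by (simp add: field_simps)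
qed

lemma avg_comm:
  assumes t: "0 \<le> t"
  shows "T t (avg T h x) = avg T h (T t x)"
proof -
  have hd: "h \<le> \<delta>" using hpos h2 by simp
  have "T t (integral {0..h} (\<lambda>s. T s x)) = integral {0..h} (T t \<circ> (\<lambda>s. T s x))"
    by (rule integral_linear[symmetric, OF int_ok blinfun.bounded_linear_right]) (use hd in auto)
  also have "\<dots> = integral {0..h} (\<lambda>s. T s (T t x))"
  proof (rule integral_cong)
    fix s assume "s \<in> {0..h}"
    then have "T t (T s x) = T (t + s) x" "T s (T t x) = T (s + t) x" using Tadd t by auto
    then show "(T t \<circ> (\<lambda>s. T s x)) s = T s (T t x)" by (simp add: add.commute)
  qed
  finally show ?thesis unfolding avg_def by (simp add: blinfun.scaleR_right)
qed

lemma avg_diff: "avg T h (x - y) = avg T h x - avg T h y"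
proof -
  have hd: "h \<le> \<delta>" using hpos h2 by simp
  have "integral {0..h} (\<lambda>s. T s (x - y)) = integral {0..h} (\<lambda>s. T s x - T s y)"
    by (simp add: blinfun.diff_right)
  also have "\<dots> = integral {0..h} (\<lambda>s. T s x) - integral {0..h} (\<lambda>s. T s y)"
    by (rule integral_diff) (use int_ok hd in auto)
  finally show ?thesis unfolding avg_def by (simp add: scaleR_diff_right)
qed

lemma avg_P3:
  assumes "0 \<le> t"
  shows "norm (T t (avg T h x) - avg T h x) \<le> K * norm (T t x - x)"
  using avg_comm[OF assms] avg_diff[of "T t x" x] avg_bound[of "T t x - x"] by simp

lemma avg_P2:
  assumes t: "0 < t" "t \<le> h" and C: "\<forall>s\<in>{0..2*h}. norm (T s x) \<le> C"
  shows "norm (T t (avg T h x) - avg T h x) \<le> 2 * t * C / h"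
proof -
  define g where "g = (\<lambda>s. T s x)"
  have htd: "h + t \<le> \<delta>" using t h2 by simp
  have "T t (integral {0..h} g) = integral {0..h} (T t \<circ> g)"
    unfolding g_def by (rule integral_linear[symmetric, OF int_ok blinfun.bounded_linear_right]) (use htd t in auto)
  also have "\<dots> = integral {0..h} (g \<circ> (+) t)"
  proof (rule integral_cong)
    fix s assume "s \<in> {0..h}"
    then show "(T t \<circ> g) s = (g \<circ> (+) t) s" using Tadd t unfolding g_def by auto
  qed
  also have "\<dots> = integral {t..h+t} g" using integral_shift_Icc_real[of 0 h g t] by simp
  finally have sh: "T t (integral {0..h} g) = integral {t..h+t} g" .
  have intg: "g integrable_on {0..h+t}" unfolding g_def by (rule int_ok) (use htd in auto)
  have c1: "integral {0..t} g + integral {t..h+t} g = integral {0..h+t} g"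
    by (rule Henstock_Kurzweil_Integration.integral_combine[OF _ _ intg]) (use t in auto)
  have c2: "integral {0..h} g + integral {h..h+t} g = integral {0..h+t} g"
    by (rule Henstock_Kurzweil_Integration.integral_combine[OF _ _ intg]) (use t hpos in auto)
  have D: "T t (integral {0..h} g) - integral {0..h} g = integral {h..h+t} g - integral {0..t} g"
    using sh c1 c2 by (simp add: algebra_simps)
  have n1: "norm (integral {h..h+t} g) \<le> C * (h + t - h)"
    by (rule integral_bound) (use t hpos htd C in \<open>auto simp: g_def intro!: cont_sub\<close>)
  have n2: "norm (integral {0..t} g) \<le> C * (t - 0)"
    by (rule integral_bound) (use t hpos htd C in \<open>auto simp: g_def intro!: cont_sub\<close>)
  have nW: "norm (T t (integral {0..h} g) - integral {0..h} g) \<le> 2 * t * C"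
    unfolding D using norm_triangle_ineq4[of "integral {h..h+t} g" "integral {0..t} g"] n1 n2 by (simp add: algebra_simps)
  have "T t (avg T h x) - avg T h x = (1 / h) *\<^sub>R (T t (integral {0..h} g) - integral {0..h} g)"
    unfolding avg_def g_def by (simp add: blinfun.scaleR_right scaleR_diff_right)
  then have "norm (T t (avg T h x) - avg T h x) = (1 / h) * norm (T t (integral {0..h} g) - integral {0..h} g)"
    using hpos by simp
  also have "\<dots> \<le> (1 / h) * (2 * t * C)" using nW hpos by (intro mult_left_mono) auto
  finally show ?thesis by simp
qed

end

lemma ET_unif:
  assumes U: "is_ultrafilter U" and f: "f \<in> E_T U T" and e: "e > 0"
  shows "\<exists>d>0. eventually (\<lambda>i. \<forall>s. 0 < s \<and> s < d \<longrightarrow> norm (T s (f i) - f i) < e) U"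
proof -
  have nb: "U \<noteq> bot" and uf: "\<And>P. eventually P U \<or> eventually (\<lambda>i. \<not> P i) U"
    using U unfolding is_ultrafilter_def by auto
  obtain d where d: "d > 0" and H: "\<And>t :: 'b \<Rightarrow> real. eventually (\<lambda>i. 0 < t i \<and> t i < d) U \<Longrightarrow>
      eventually (\<lambda>i. norm (T (t i) (f i) - f i) < e) U"
    using f e unfolding E_T_def by blast
  show ?thesis
  proof (intro exI conjI)
    show "d > 0" by (rule d)
    show "eventually (\<lambda>i. \<forall>s. 0 < s \<and> s < d \<longrightarrow> norm (T s (f i) - f i) < e) U"
    proof (rule ccontr)
      assume "\<not> ?thesis"
      then have ev: "eventually (\<lambda>i. \<exists>s. 0 < s \<and> s < d \<and> \<not> norm (T s (f i) - f i) < e) U"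
        using uf[of "\<lambda>i. \<forall>s. 0 < s \<and> s < d \<longrightarrow> norm (T s (f i) - f i) < e"] by auto
      define t where "t i = (if \<exists>s. 0 < s \<and> s < d \<and> \<not> norm (T s (f i) - f i) < e
         then SOME s. 0 < s \<and> s < d \<and> \<not> norm (T s (f i) - f i) < e else d / 2)" for i
      have tP: "0 < t i \<and> t i < d" for i
      proof (cases "\<exists>s. 0 < s \<and> s < d \<and> \<not> norm (T s (f i) - f i) < e")
        case True
        then have "0 < (SOME s. 0 < s \<and> s < d \<and> \<not> norm (T s (f i) - f i) < e) \<and>
            (SOME s. 0 < s \<and> s < d \<and> \<not> norm (T s (f i) - f i) < e) < d \<and>
            \<not> norm (T (SOME s. 0 < s \<and> s < d \<and> \<not> norm (T s (f i) - f i) < e) (f i) - f i) < e"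
          by (rule someI_ex)
        moreover have "t i = (SOME s. 0 < s \<and> s < d \<and> \<not> norm (T s (f i) - f i) < e)"
          by (simp only: t_def if_P[OF True] if_True)
        ultimately show ?thesis by simp
      next
        case False
        then have "t i = d / 2" by (simp only: t_def if_not_P[OF False] if_False)
        then show ?thesis using d by simp
      qed
      have ev2: "eventually (\<lambda>i. norm (T (t i) (f i) - f i) < e) U"
        by (rule H) (use tP in simp)
      have "eventually (\<lambda>i. False) U" using ev ev2
      proof (rule eventually_elim2)
        fix i assume ex: "\<exists>s. 0 < s \<and> s < d \<and> \<not> norm (T s (f i) - f i) < e"
          and lt: "norm (T (t i) (f i) - f i) < e"
        have "\<not> norm (T (SOME s. 0 < s \<and> s < d \<and> \<not> norm (T s (f i) - f i) < e) (f i) - f i) < e"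
          using someI_ex[OF ex] by blast
        moreover have "t i = (SOME s. 0 < s \<and> s < d \<and> \<not> norm (T s (f i) - f i) < e)"
          by (simp only: t_def if_P[OF ex] if_True)
        ultimately show False using lt by simp
      qed
      then show False using nb by (simp add: eventually_False)
    qed
  qed
qed

lemma ET_to_mT:
  assumes U: "is_ultrafilter U" and f: "f \<in> E_T U T"
  shows "\<exists>x\<in>mT T. infs U (\<lambda>i. x i - f i)"
proof -
  have nb: "U \<noteq> bot" using U unfolding is_ultrafilter_def by auto
  have "f \<in> fin_star U" using f unfolding E_T_def by blast
  then obtain M :: nat where FM: "eventually (\<lambda>i. norm (f i) < real M) U"
    unfolding fin_star_def finite_norm_def by blast
  have "\<exists>d>0. d \<le> \<delta> \<and> eventually (\<lambda>i. \<forall>s. 0 < s \<and> s < d \<longrightarrow> norm (T s (f i) - f i) < 1 / (real m + 1)) U" for m :: nat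
  proof -
    obtain d where d: "d > 0" "eventually (\<lambda>i. \<forall>s. 0 < s \<and> s < d \<longrightarrow> norm (T s (f i) - f i) < 1 / (real m + 1)) U"
      using ET_unif[OF U f, of "1 / (real m + 1)"] by auto
    show ?thesis
    proof (intro exI conjI)
      show "min d \<delta> > 0" using d dpos by simp
      show "min d \<delta> \<le> \<delta>" by simp
      show "eventually (\<lambda>i. \<forall>s. 0 < s \<and> s < min d \<delta> \<longrightarrow> norm (T s (f i) - f i) < 1 / (real m + 1)) U"
        using d(2) by (rule eventually_mono) simp
    qed
  qed
  then have "\<forall>m. \<exists>d. d > 0 \<and> d \<le> \<delta> \<and> eventually (\<lambda>i. \<forall>s. 0 < s \<and> s < d \<longrightarrow> norm (T s (f i) - f i) < 1 / (real m + 1)) U"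
    by blast
  then have "\<exists>dd. \<forall>m. dd m > 0 \<and> dd m \<le> \<delta> \<and> eventually (\<lambda>i. \<forall>s. 0 < s \<and> s < dd m \<longrightarrow> norm (T s (f i) - f i) < 1 / (real m + 1)) U"
    by (rule choice)
  then obtain dd where ddA: "\<forall>m. dd m > 0 \<and> dd m \<le> \<delta> \<and> eventually (\<lambda>i. \<forall>s. 0 < s \<and> s < dd m \<longrightarrow> norm (T s (f i) - f i) < 1 / (real m + 1)) U"
    by blast
  have dd: "\<And>m. dd m > 0" "\<And>m. dd m \<le> \<delta>"
    "\<And>m. eventually (\<lambda>i. \<forall>s. 0 < s \<and> s < dd m \<longrightarrow> norm (T s (f i) - f i) < 1 / (real m + 1)) U"
    using ddA by auto
  define h where "h m = dd m / 3" for m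
  have hpos: "h m > 0" for m using dd(1)[of m] by (simp add: h_def)
  have h2: "2 * h m \<le> \<delta>" for m using dd(1,2)[of m] by (simp add: h_def)
  have hd: "2 * h m < dd m" for m using dd(1)[of m] by (simp add: h_def)
  define Bs where "Bs m = {i. \<forall>s. 0 < s \<and> s < dd m \<longrightarrow> norm (T s (f i) - f i) < 1 / (real m + 1)}" for m
  define D where "D n = {i. norm (f i) < real M \<and> (\<forall>m\<le>n. i \<in> Bs m)}" for n
  have evD: "eventually (\<lambda>i. i \<in> D n) U" for n
  proof -
    have "eventually (\<lambda>i. \<forall>m\<in>{..n}. i \<in> Bs m) U"
      by (rule eventually_ball_finite) (use dd(3) in \<open>auto simp: Bs_def\<close>)
    then show ?thesis using FM unfolding D_def by (auto elim: eventually_elim2)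
  qed
  have Dmono: "m \<le> n \<Longrightarrow> i \<in> D n \<Longrightarrow> i \<in> D m" for m n i unfolding D_def by auto
  define lvl where "lvl i = (LEAST n. i \<notin> D (Suc n))" for i
  have lvl_in: "i \<in> D (lvl i)" and lvl_out: "i \<notin> D (Suc (lvl i))"
    if iD0: "i \<in> D 0" and exn: "\<exists>n. i \<notin> D n" for i
  proof -
    obtain n where n: "i \<notin> D n" using exn by blast
    then obtain n' where "n = Suc n'" using iD0 by (cases n) auto
    then have ex: "\<exists>n. i \<notin> D (Suc n)" using n by blast
    show "i \<notin> D (Suc (lvl i))" unfolding lvl_def by (rule LeastI_ex[OF ex])
    show "i \<in> D (lvl i)"
    proof (cases "lvl i")
      case 0 then show ?thesis using iD0 by simp
    next
      case (Suc j)
      then have "j < lvl i" by simp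
      then have "\<not> i \<notin> D (Suc j)" unfolding lvl_def by (rule not_less_Least)
      then show ?thesis using Suc by simp
    qed
  qed
  have lvl_ge: "n \<le> lvl i" if "i \<in> D 0" "\<exists>n. i \<notin> D n" "i \<in> D n" for i n
  proof (rule ccontr)
    assume "\<not> n \<le> lvl i"
    then have "Suc (lvl i) \<le> n" by simp
    then have "i \<in> D (Suc (lvl i))" using Dmono that(3) by blast
    then show False using lvl_out[OF that(1,2)] by blast
  qed
  define x where "x i = (if i \<notin> D 0 then 0 else if (\<forall>n. i \<in> D n) then f i
      else avg T (h (lvl i)) (f i))" for i
  have Dprops: "norm (f i) < real M" "\<And>m. m \<le> n \<Longrightarrow> \<forall>s. 0 < s \<and> s < dd m \<longrightarrow> norm (T s (f i) - f i) < 1 / (real m + 1)"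
    if "i \<in> D n" for i n using that unfolding D_def Bs_def by auto
  have near: "\<forall>s\<in>{0..h k}. norm (T s (f i) - f i) \<le> 1 / (real k + 1)" if "i \<in> D k" for i k
  proof
    fix s assume s: "s \<in> {0..h k}"
    show "norm (T s (f i) - f i) \<le> 1 / (real k + 1)"
    proof (cases "s = 0")
      case True then show ?thesis by (simp add: T0)
    next
      case False
      then have "0 < s \<and> s < dd k" using s hd[of k] hpos[of k] by auto
      then show ?thesis using Dprops(2)[OF that, of k] by fastforce
    qed
  qed
  have Mpos: "0 \<le> real M" by simp
  have xb: "norm (x i) \<le> K * real M" for i
  proof -
    consider "i \<notin> D 0" | "i \<in> D 0" "\<forall>n. i \<in> D n" | "i \<in> D 0" "\<exists>n. i \<notin> D n" by blast
    then show ?thesis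
    proof cases
      case 1 then show ?thesis using K1 by (simp add: x_def)
    next
      case 2
      then have "norm (f i) < real M" using Dprops(1) by blast
      moreover have "real M \<le> K * real M" using K1 Mpos by (simp add: mult_le_cancel_right1)
      ultimately show ?thesis using 2 by (simp add: x_def)
    next
      case 3
      have nall: "\<not> (\<forall>n. i \<in> D n)" using 3 by blast
      have a0: "\<not> (i \<notin> D 0)" using 3(1) by simp
      have xi: "x i = avg T (h (lvl i)) (f i)" unfolding x_def by (simp only: if_not_P[OF a0] if_not_P[OF nall])
      have "norm (avg T (h (lvl i)) (f i)) \<le> K * norm (f i)"
        by (rule avg_bound[OF hpos h2])
      also have "\<dots> \<le> K * real M" using Dprops(1)[OF lvl_in[OF 3]] K1 by (intro mult_left_mono) auto
      finally show ?thesis using xi by simp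
    qed
  qed
  then have xl: "x \<in> linf" unfolding linf_iff by blast
  have xinf: "infs U (\<lambda>i. x i - f i)"
    unfolding infs_def
  proof (intro allI impI)
    fix e :: real assume e: "e > 0"
    obtain n :: nat where n: "inverse (real (Suc n)) < e" using reals_Archimedean e by blast
    then have n': "1 / (real n + 1) < e" by (simp add: inverse_eq_divide add.commute)
    show "eventually (\<lambda>i. norm (x i - f i) < e) U"
      using evD[of n]
    proof (rule eventually_mono)
      fix i assume iD: "i \<in> D n"
      have i0: "i \<in> D 0" using Dmono iD by blast
      show "norm (x i - f i) < e"
      proof (cases "\<forall>n. i \<in> D n")
        case True then show ?thesis using i0 e by (simp add: x_def)
      next
        case False
        then have ex: "\<exists>n. i \<notin> D n" by blast
        have a0: "\<not> (i \<notin> D 0)" using i0 by simp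
        have xi: "x i = avg T (h (lvl i)) (f i)" unfolding x_def by (simp only: if_not_P[OF a0] if_not_P[OF False])
        have "norm (avg T (h (lvl i)) (f i) - f i) \<le> 1 / (real (lvl i) + 1)"
          by (rule avg_near[OF hpos h2 near[OF lvl_in[OF i0 ex]]])
        also have "\<dots> \<le> 1 / (real n + 1)" using lvl_ge[OF i0 ex iD] by (simp add: frac_le)
        finally show ?thesis using xi n' by simp
      qed
    qed
  qed
  have unif: "\<exists>d>0. \<forall>t. 0 < t \<and> t < d \<longrightarrow> (\<forall>i. norm (T t (x i) - x i) \<le> e / 2)" if e: "e > 0" for e
  proof -
    have Kp: "K > 0" using K1 by simp
    obtain n :: nat where n: "inverse (real (Suc n)) < e / (2 * K)" using reals_Archimedean e Kp
      by (metis divide_pos_pos mult_pos_pos zero_less_numeral)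
    then have n': "1 / (real n + 1) < e / (2 * K)" by (simp add: inverse_eq_divide add.commute)
    then have nK: "K * (1 / (real n + 1)) \<le> e / 2" using Kp by (simp add: field_simps)
    have n2: "1 / (real n + 1) \<le> e / 2"
    proof -
      have "1 * (1 / (real n + 1)) \<le> K * (1 / (real n + 1))" by (rule mult_right_mono) (use K1 in auto)
      then show ?thesis using nK by linarith
    qed
    define C where "C = real M + 1"
    have Cpos: "C > 0" unfolding C_def by simp
    define g where "g k = min (h k) (h k * e / (4 * C))" for k
    have gpos: "g k > 0" for k using hpos[of k] e Cpos by (simp add: g_def)
    define d where "d = Min (insert (dd n) (g ` {..<n}))"
    have dpos': "d > 0" unfolding d_def using dd(1) gpos by (subst Min_gr_iff) auto
    have d1: "d \<le> dd n" unfolding d_def by (rule Min_le) auto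
    have d2: "d \<le> g k" if "k < n" for k unfolding d_def by (rule Min_le) (use that in auto)
    show ?thesis
    proof (intro exI conjI allI impI)
      show "d > 0" by (rule dpos')
      fix t i assume t: "0 < t \<and> t < d"
      consider "i \<notin> D 0" | "i \<in> D 0" "\<forall>n. i \<in> D n" | "i \<in> D 0" "\<exists>n. i \<notin> D n" by blast
      then show "norm (T t (x i) - x i) \<le> e / 2"
      proof cases
        case 1 then show ?thesis using e by (simp add: x_def)
      next
        case 2
        then have "norm (T t (f i) - f i) < 1 / (real n + 1)"
          using Dprops(2)[of i n n] t d1 by auto
        then show ?thesis using 2 n2 by (simp add: x_def)
      next
        case 3
        define k where "k = lvl i"
        have nall: "\<not> (\<forall>n. i \<in> D n)" using 3 by blast
        have a0: "\<not> (i \<notin> D 0)" using 3(1) by simp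
        have xi: "x i = avg T (h k) (f i)" unfolding x_def k_def by (simp only: if_not_P[OF a0] if_not_P[OF nall])
        have ik: "i \<in> D k" using lvl_in[OF 3] k_def by simp
        show ?thesis
        proof (cases "n \<le> k")
          case True
          have "norm (T t (avg T (h k) (f i)) - avg T (h k) (f i)) \<le> K * norm (T t (f i) - f i)"
            by (rule avg_P3[OF hpos h2]) (use t in simp)
          also have "\<dots> \<le> K * (1 / (real n + 1))"
            using Dprops(2)[OF ik True] t d1 K1 by (intro mult_left_mono) auto
          finally have "norm (T t (avg T (h k) (f i)) - avg T (h k) (f i)) \<le> K * (1 / (real n + 1))" .
          then show ?thesis unfolding xi using nK by linarith
        next
          case False
          then have kn: "k < n" by simp
          have tg: "t \<le> g k" using d2[OF kn] t by simp
          have th: "t \<le> h k" using tg by (simp add: g_def)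
          have te: "t \<le> h k * e / (4 * C)" using tg by (simp add: g_def)
          have Cb: "\<forall>s\<in>{0..2 * h k}. norm (T s (f i)) \<le> C"
          proof
            fix s assume s: "s \<in> {0..2 * h k}"
            have fM: "norm (f i) < real M" using Dprops(1)[OF ik] .
            show "norm (T s (f i)) \<le> C"
            proof (cases "s = 0")
              case True then show ?thesis using fM by (simp add: T0 C_def)
            next
              case False
              then have "0 < s \<and> s < dd k" using s hd[of k] by auto
              then have "norm (T s (f i) - f i) < 1 / (real k + 1)" using Dprops(2)[OF ik, of k] by auto
              moreover have "1 / (real k + 1) \<le> 1" by simp
              ultimately show ?thesis using fM norm_triangle_ineq2[of "T s (f i)" "f i"] unfolding C_def by linarith
            qed
          qed
          have "norm (T t (avg T (h k) (f i)) - avg T (h k) (f i)) \<le> 2 * t * C / h k"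
            by (rule avg_P2[OF hpos h2]) (use t th Cb in auto)
          also have "\<dots> \<le> 2 * (h k * e / (4 * C)) * C / h k"
            using te Cpos hpos[of k] by (intro divide_right_mono mult_right_mono mult_left_mono) auto
          also have "\<dots> = e / 2" using Cpos hpos[of k] by (simp add: field_simps)
          finally show ?thesis unfolding xi .
        qed
      qed
    qed
  qed
  have "x \<in> mT T"
    unfolding mT_def
  proof (intro CollectI conjI xl tendstoI)
    fix e :: real assume e: "e > 0"
    obtain d where d: "d > 0" "\<And>t. 0 < t \<and> t < d \<Longrightarrow> \<forall>i. norm (T t (x i) - x i) \<le> e / 2"
      using unif[OF e] by blast
    show "eventually (\<lambda>t. dist (supnorm (\<lambda>i. T t (x i) - x i)) 0 < e) (at_right 0)"
      unfolding eventually_at_right_field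
    proof (intro exI conjI allI impI)
      show "(0::real) < d" by (rule d(1))
      fix t :: real assume "0 < t" "t < d"
      then have b: "\<forall>i. norm (T t (x i) - x i) \<le> e / 2" using d(2) by blast
      have "supnorm (\<lambda>i. T t (x i) - x i) \<le> e / 2"
        unfolding supnorm_def by (rule cSUP_least) (use b in auto)
      moreover have "0 \<le> supnorm (\<lambda>i. T t (x i) - x i)"
      proof -
        have "(\<lambda>i. T t (x i) - x i) \<in> linf" unfolding linf_iff using b by blast
        then have "norm (T t (x undefined) - x undefined) \<le> supnorm (\<lambda>i. T t (x i) - x i)"
          by (rule supnorm_ge)
        then show ?thesis using norm_ge_zero order_trans by blast
      qed
      ultimately show "dist (supnorm (\<lambda>i. T t (x i) - x i)) 0 < e" using e by (simp add: dist_real_def)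
    qed
  qed
  then show ?thesis using xinf by blast
qed


end

end


lemma mT_ET:
  fixes x :: "'i \<Rightarrow> 'a::banach" and U :: "'i filter" and T :: "real \<Rightarrow> ('a \<Rightarrow>\<^sub>L 'a)"
  assumes x: "x \<in> mT T"
  shows "x \<in> E_T U T"
proof -
  have xl: "x \<in> linf" and tl: "((\<lambda>t. supnorm (\<lambda>i. T t (x i) - x i)) \<longlongrightarrow> 0) (at_right 0)"
    using x unfolding mT_def by auto
  obtain B where B: "\<And>i. norm (x i) \<le> B" using xl unfolding linf_iff by blast
  have lin: "(\<lambda>i. T s (x i) - x i) \<in> linf" for s
  proof -
    have "norm (T s (x i) - x i) \<le> norm (T s) * B + B" for i
    proof -
      have "norm (T s (x i) - x i) \<le> norm (T s (x i)) + norm (x i)" by (rule norm_triangle_ineq4)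
      also have "\<dots> \<le> norm (T s) * norm (x i) + norm (x i)" using norm_blinfun[of "T s" "x i"] by simp
      also have "\<dots> \<le> norm (T s) * B + B" using B[of i] by (intro add_mono mult_left_mono) auto
      finally show ?thesis .
    qed
    then show ?thesis unfolding linf_iff by blast
  qed
  have "\<exists>d>0. \<forall>t :: 'i \<Rightarrow> real. eventually (\<lambda>i. 0 < t i \<and> t i < d) U \<longrightarrow>
      eventually (\<lambda>i. norm (T (t i) (x i) - x i) < e) U" if e: "e > 0" for e
  proof -
    have "eventually (\<lambda>t. supnorm (\<lambda>i. T t (x i) - x i) < e) (at_right 0)"
      using order_tendstoD(2)[OF tl e] .
    then obtain b :: real where b: "b > 0" "\<And>y. 0 < y \<Longrightarrow> y < b \<Longrightarrow> supnorm (\<lambda>i. T y (x i) - x i) < e"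
      unfolding eventually_at_right_field by auto
    show ?thesis
    proof (intro exI conjI allI impI)
      show "b > 0" by (rule b(1))
      fix t :: "'i \<Rightarrow> real" assume "eventually (\<lambda>i. 0 < t i \<and> t i < b) U"
      then show "eventually (\<lambda>i. norm (T (t i) (x i) - x i) < e) U"
      proof (rule eventually_mono)
        fix i assume "0 < t i \<and> t i < b"
        then have "supnorm (\<lambda>j. T (t i) (x j) - x j) < e" using b(2) by blast
        moreover have "norm (T (t i) (x i) - x i) \<le> supnorm (\<lambda>j. T (t i) (x j) - x j)"
          using supnorm_ge[OF lin[of "t i"], of i] by simp
        ultimately show "norm (T (t i) (x i) - x i) < e" by simp
      qed
    qed
  qed
  then show ?thesis unfolding E_T_def using linf_fin[OF xl] by blast
qed

lemma zero_mT: "(\<lambda>i. 0) \<in> mT T"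
  unfolding mT_def using linf_zero by (simp add: supnorm_def)

lemma Phi_iota_mq:
  assumes x: "x \<in> mT T"
  shows "Phi U (iota U (mq_class U T x)) = hat_class U x"
proof -
  have xl: "x \<in> linf" using x unfolding mT_def by auto
  have "(\<lambda>i. x i - x i) \<in> cU U \<inter> mT T"
    using zero_mT[of T] linf_zero infs_zero[of U] by (simp add: cU_iff)
  then have "x \<in> mq_class U T x" unfolding mq_class_def using x by blast
  then have "(SOME y. y \<in> mq_class U T x) \<in> mq_class U T x"
    by (rule someI[where P="\<lambda>y. y \<in> mq_class U T x"])
  moreover define y where "y = (SOME y. y \<in> mq_class U T x)"
  ultimately have ym: "y \<in> mq_class U T x" by simp
  then have "y \<in> mT T" "(\<lambda>i. y i - x i) \<in> cU U" unfolding mq_class_def by auto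
  then have y: "y \<in> linf" "infs U (\<lambda>i. y i - x i)" unfolding mT_def cU_iff by auto
  have "Phi U (iota U (mq_class U T x)) = hat_class U y"
    unfolding iota_def y_def[symmetric] by (rule Phi_lq[OF y(1)])
  also have "\<dots> = hat_class U x" by (rule hat_class_eq[OF y(2)])
  finally show ?thesis .
qed

theorem mainTheorem1:
  fixes T :: "real \<Rightarrow> ('a::banach \<Rightarrow>\<^sub>L 'a)" and U :: "'i filter"
  assumes "strongly_continuous_semigroup T"
    and "is_ultrafilter U" and "countably_incomplete U"
  shows "(\<forall>f::'i \<Rightarrow> 'a. f \<in> linf \<longrightarrow> Phi U (lq_class U f) = hat_class U f)
    \<and> bij_betw (Phi U) (lq_space U :: ('i \<Rightarrow> 'a) set set) (hat_space U)
    \<and> (\<forall>X\<in>lq_space U :: ('i \<Rightarrow> 'a) set set. \<forall>Y\<in>lq_space U. \<forall>a::real.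
          Phi U (lq_add U X Y) = hat_add U (Phi U X) (Phi U Y)
        \<and> Phi U (lq_scale U a X) = hat_scale U a (Phi U X))
    \<and> (\<forall>X\<in>lq_space U :: ('i \<Rightarrow> 'a) set set. hat_norm U (Phi U X) = qnorm X)
    \<and> Phi U ` iota U ` mq_space U T = hat_E_T U T"
proof -
  have sg: "strongly_continuous_semigroup T" and U: "is_ultrafilter U" using assms by auto
  obtain \<delta> K where dK: "\<delta> > 0" "K \<ge> 1" "\<forall>s. 0 \<le> s \<and> s \<le> \<delta> \<longrightarrow> norm (T s) \<le> K"
    using loc_bound[OF sg] by blast
  have last: "Phi U ` iota U ` mq_space U T = hat_E_T U T"
  proof -
    have "Phi U ` iota U ` mq_space U T = (\<lambda>x. Phi U (iota U (mq_class U T x))) ` mT T"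
      unfolding mq_space_def image_image ..
    also have "\<dots> = hat_class U ` mT T"
      by (rule image_cong) (auto simp: Phi_iota_mq)
    also have "\<dots> = hat_class U ` E_T U T"
    proof
      show "hat_class U ` mT T \<subseteq> hat_class U ` E_T U T" using mT_ET by blast
    next
      show "hat_class U ` E_T U T \<subseteq> hat_class U ` mT T"
      proof
        fix Z assume "Z \<in> hat_class U ` E_T U T"
        then obtain f where f: "f \<in> E_T U T" "Z = hat_class U f" by blast
        obtain x where x: "x \<in> mT T" "infs U (\<lambda>i. x i - f i)"
          using ET_to_mT[OF sg dK(1) dK(2) _ U f(1)] dK(3) by blast
        have "hat_class U f = hat_class U x" by (rule hat_class_eq[OF infs_sym[OF x(2)]])
        then show "Z \<in> hat_class U ` mT T" using f x by blast
      qed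
    qed
    finally show ?thesis unfolding hat_E_T_def .
  qed
  show ?thesis
  proof (intro conjI)
    show "\<forall>f::'i \<Rightarrow> 'a. f \<in> linf \<longrightarrow> Phi U (lq_class U f) = hat_class U f" using Phi_lq by blast
    show "bij_betw (Phi U) (lq_space U :: ('i \<Rightarrow> 'a) set set) (hat_space U)" by (rule Phi_bij)
    show "\<forall>X\<in>lq_space U :: ('i \<Rightarrow> 'a) set set. \<forall>Y\<in>lq_space U. \<forall>a::real.
          Phi U (lq_add U X Y) = hat_add U (Phi U X) (Phi U Y)
        \<and> Phi U (lq_scale U a X) = hat_scale U a (Phi U X)"
      using Phi_add Phi_scale by blast
    show "\<forall>X\<in>lq_space U :: ('i \<Rightarrow> 'a) set set. hat_norm U (Phi U X) = qnorm X"
      using Phi_norm[OF U] by blast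
    show "Phi U ` iota U ` mq_space U T = hat_E_T U T" by (rule last)
  qed
qed

end
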